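(* Let $X$ be a metric space. (1) If $f_0,f_1\in\mathrm{E}'(X)$ and $\lambda\in(0,1)$, then $f:=(1-\lambda)f_0+\lambda f_1\in\Delta(X)$ and $A(f)=A(f_0)\cap A(f_1)$; so $f\in\mathrm{E}'(X)$ if and only if $\bigcup(A(f_0)\cap A(f_1))=X$. (2) For $A_0,A_1\in\mathscr{A}(X)$ the following are equivalent: (i) $P(A_0)\cup P(A_1)\subset P(A)$ for some $A\in\mathscr A(X)$; (ii) $\bigcup(A_0\cap A_1)=X$; (iii) $A_0\cap A_1\in\mathscr A(X)$. If (i)–(iii) hold and $A\in\mathscr A(X)$ is as in (i), then $P(A_0)\cup P(A_1)\subset P(A_0\cap A_1)\subset P(A)$.
   Context: For $f\colon X\to\mathbb{R}$, $A(f)$ is the set of unordered pairs $\{x,y\}$ ($x=y$ allowed) with $f(x)+f(y)=d(x,y)$. $\Delta(X)=\{f\in\mathbb R^X: f(x)+f(y)\ge d(x,y)\ \forall x,y\}$; $\mathrm{E}'(X)=\{f\in\Delta(X):\bigcup A(f)=X\}$; $\mathscr A(X)=\{A(f): f\in\mathrm{E}'(X)\}$; for $A\in\mathscr A(X)$, $H(A)=\{g\in\mathbb{R}^X: g(x)+g(y)=d(x,y)\ \forall \{x,y\}\in A\}$ and $P(A)=\mathrm{E}'(X)\cap H(A)=\{g\in\mathrm{E}'(X): A\subset A(g)\}$. *)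

theory Defs
  imports "HOL-Analysis.Analysis"
begin

text \<open>The metric space X is the type 'a of class metric_space (X = UNIV), with metric dist.
  Unordered pairs {x,y} (x = y allowed) are represented as sets {x,y}.\<close>

definition Apairs :: "('a::metric_space \<Rightarrow> real) \<Rightarrow> 'a set set" where
  "Apairs f = {{x, y} | x y. f x + f y = dist x y}"

definition Delta :: "('a::metric_space \<Rightarrow> real) set" where
  "Delta = {f. \<forall>x y. dist x y \<le> f x + f y}"

definition Eprime :: "('a::metric_space \<Rightarrow> real) set" where
  "Eprime = {f \<in> Delta. \<Union>(Apairs f) = UNIV}"

definition Ascr :: "'a::metric_space set set set" where
  "Ascr = Apairs ` Eprime"

definition Hset :: "'a::metric_space set set \<Rightarrow> ('a \<Rightarrow> real) set" where
  "Hset A = {g. \<forall>x y. {x, y} \<in> A \<longrightarrow> g x + g y = dist x y}"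

definition Pset :: "'a::metric_space set set \<Rightarrow> ('a \<Rightarrow> real) set" where
  "Pset A = Eprime \<inter> Hset A"

end

theory Submission
  imports Defs
begin

lemma Apairs_mem: "{x, y} \<in> Apairs f \<longleftrightarrow> f x + f y = dist x y"
proof
  assume "{x, y} \<in> Apairs f"
  then obtain a b where ab: "{x,y} = {a,b}" "f a + f b = dist a b" unfolding Apairs_def by blast
  then show "f x + f y = dist x y" by (auto simp: doubleton_eq_iff dist_commute add.commute)
qed (auto simp: Apairs_def)

lemma Apairs_elem: "S \<in> Apairs f \<Longrightarrow> \<exists>x y. S = {x,y}"
  unfolding Apairs_def by blast

lemma Hset_anti: "A \<subseteq> B \<Longrightarrow> Hset B \<subseteq> Hset A"
  unfolding Hset_def by blast

lemma Pset_anti: "A \<subseteq> B \<Longrightarrow> Pset B \<subseteq> Pset A"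
  unfolding Pset_def using Hset_anti by blast

lemma self_Pset: "g \<in> Eprime \<Longrightarrow> g \<in> Pset (Apairs g)"
  unfolding Pset_def Hset_def using Apairs_mem by blast

lemma Pset_sub: assumes "g \<in> Pset A" "A \<in> Ascr" shows "A \<subseteq> Apairs g"
proof
  fix S assume S: "S \<in> A"
  from assms(2) obtain h where "A = Apairs h" unfolding Ascr_def by blast
  with S obtain x y where xy: "S = {x,y}" using Apairs_elem by blast
  with assms(1) S have "g x + g y = dist x y" unfolding Pset_def Hset_def by blast
  with xy show "S \<in> Apairs g" using Apairs_mem by blast
qed

lemma part1:
  fixes f0 f1 :: "'a::metric_space \<Rightarrow> real"
  assumes "f0 \<in> Eprime" "f1 \<in> Eprime" "0 < lam" "lam < 1"
  defines "f \<equiv> (\<lambda>x. (1 - lam) * f0 x + lam * f1 x)"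
  shows "f \<in> Delta \<and> Apairs f = Apairs f0 \<inter> Apairs f1 \<and>
        (f \<in> Eprime \<longleftrightarrow> \<Union>(Apairs f0 \<inter> Apairs f1) = UNIV)"
proof -
  have d0: "\<And>x y. dist x y \<le> f0 x + f0 y" and d1: "\<And>x y. dist x y \<le> f1 x + f1 y"
    using assms(1,2) unfolding Eprime_def Delta_def by auto
  have key: "\<And>x y. f x + f y = (1 - lam) * (f0 x + f0 y) + lam * (f1 x + f1 y)"
    unfolding f_def by (simp add: algebra_simps)
  have ge: "\<And>x y. dist x y \<le> f x + f y"
  proof -
    fix x y
    have "(1 - lam) * dist x y \<le> (1 - lam) * (f0 x + f0 y)"
      using d0 assms(4) by (intro mult_left_mono) auto
    moreover have "lam * dist x y \<le> lam * (f1 x + f1 y)"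
      using d1 assms(3) by (intro mult_left_mono) auto
    ultimately show "dist x y \<le> f x + f y" unfolding key by (simp add: algebra_simps)
  qed
  have eq: "\<And>x y. f x + f y = dist x y \<longleftrightarrow> f0 x + f0 y = dist x y \<and> f1 x + f1 y = dist x y"
  proof
    fix x y assume h: "f x + f y = dist x y"
    have a: "(1 - lam) * dist x y \<le> (1 - lam) * (f0 x + f0 y)"
      using d0 assms(4) by (intro mult_left_mono) auto
    have b: "lam * dist x y \<le> lam * (f1 x + f1 y)"
      using d1 assms(3) by (intro mult_left_mono) auto
    have c: "(1 - lam) * dist x y = (1 - lam) * (f0 x + f0 y)"
      using a b h key[of x y] by (simp add: algebra_simps)
    have e: "lam * dist x y = lam * (f1 x + f1 y)"
      using a b h key[of x y] by (simp add: algebra_simps)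
    show "f0 x + f0 y = dist x y \<and> f1 x + f1 y = dist x y"
      using c e assms(3,4) by auto
  next
    fix x y assume "f0 x + f0 y = dist x y \<and> f1 x + f1 y = dist x y"
    then show "f x + f y = dist x y" unfolding key by (simp add: algebra_simps)
  qed
  have D: "f \<in> Delta" using ge unfolding Delta_def by blast
  have A: "Apairs f = Apairs f0 \<inter> Apairs f1"
  proof (intro equalityI subsetI)
    fix S assume "S \<in> Apairs f"
    then obtain x y where "S = {x,y}" using Apairs_elem by blast
    then show "S \<in> Apairs f0 \<inter> Apairs f1" using \<open>S \<in> Apairs f\<close> eq[of x y] Apairs_mem[of x y] by simp
  next
    fix S assume "S \<in> Apairs f0 \<inter> Apairs f1"
    then obtain x y where "S = {x,y}" using Apairs_elem by blast
    then show "S \<in> Apairs f" using \<open>S \<in> Apairs f0 \<inter> Apairs f1\<close> eq[of x y] Apairs_mem[of x y] by simp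
  qed
  show ?thesis using D A unfolding Eprime_def by simp
qed

theorem proposition4p2:
  fixes dummy :: "'a::metric_space"
  shows
  "(\<forall>(f0::'a \<Rightarrow> real) f1 (lam::real).
      f0 \<in> Eprime \<and> f1 \<in> Eprime \<and> 0 < lam \<and> lam < 1 \<longrightarrow>
      (let f = (\<lambda>x. (1 - lam) * f0 x + lam * f1 x) in
        f \<in> Delta \<and> Apairs f = Apairs f0 \<inter> Apairs f1 \<and>
        (f \<in> Eprime \<longleftrightarrow> \<Union>(Apairs f0 \<inter> Apairs f1) = UNIV)))
   \<and>
   (\<forall>(A0::'a set set) A1. A0 \<in> Ascr \<and> A1 \<in> Ascr \<longrightarrow>
      ((\<exists>A\<in>Ascr. Pset A0 \<union> Pset A1 \<subseteq> Pset A) \<longleftrightarrow> \<Union>(A0 \<inter> A1) = UNIV) \<and>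
      (\<Union>(A0 \<inter> A1) = UNIV \<longleftrightarrow> A0 \<inter> A1 \<in> Ascr) \<and>
      (\<forall>A\<in>Ascr. Pset A0 \<union> Pset A1 \<subseteq> Pset A \<longrightarrow>
         Pset A0 \<union> Pset A1 \<subseteq> Pset (A0 \<inter> A1) \<and> Pset (A0 \<inter> A1) \<subseteq> Pset A))"
proof (intro conjI allI impI)
  fix f0 f1 :: "'a \<Rightarrow> real" and lam :: real
  assume "f0 \<in> Eprime \<and> f1 \<in> Eprime \<and> 0 < lam \<and> lam < 1"
  then show "let f = (\<lambda>x. (1 - lam) * f0 x + lam * f1 x) in
        f \<in> Delta \<and> Apairs f = Apairs f0 \<inter> Apairs f1 \<and>
        (f \<in> Eprime \<longleftrightarrow> \<Union>(Apairs f0 \<inter> Apairs f1) = UNIV)"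
    using part1[of f0 f1 lam] by (simp only: Let_def)
next
  fix A0 A1 :: "'a set set"
  assume h: "A0 \<in> Ascr \<and> A1 \<in> Ascr"
  then obtain g0 g1 where g: "g0 \<in> Eprime" "g1 \<in> Eprime" "A0 = Apairs g0" "A1 = Apairs g1"
    unfolding Ascr_def by blast
  have sub: "A \<subseteq> A0 \<inter> A1" if "A \<in> Ascr" "Pset A0 \<union> Pset A1 \<subseteq> Pset A" for A
  proof -
    have "g0 \<in> Pset A" "g1 \<in> Pset A" using self_Pset g that by auto
    then show ?thesis using Pset_sub[of g0 A] Pset_sub[of g1 A] g that(1) by simp
  qed
  have ii_iii: "\<Union>(A0 \<inter> A1) = UNIV \<longleftrightarrow> A0 \<inter> A1 \<in> Ascr"
  proof
    assume u: "\<Union>(A0 \<inter> A1) = UNIV"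
    have "0 < (1/2::real)" "(1/2::real) < 1" by auto
    note P = part1[OF g(1,2) this]
    have E: "(\<lambda>x. (1 - 1/2) * g0 x + 1/2 * g1 x) \<in> Eprime"
      using P u g(3,4) by simp
    have Q: "A0 \<inter> A1 = Apairs (\<lambda>x. (1 - 1/2) * g0 x + 1/2 * g1 x)"
      using P g(3,4) by simp
    show "A0 \<inter> A1 \<in> Ascr" unfolding Ascr_def Q by (rule imageI[OF E])
  next
    assume "A0 \<inter> A1 \<in> Ascr"
    then show "\<Union>(A0 \<inter> A1) = UNIV" unfolding Ascr_def Eprime_def by auto
  qed
  show "\<Union>(A0 \<inter> A1) = UNIV \<longleftrightarrow> A0 \<inter> A1 \<in> Ascr" by (rule ii_iii)
  show "(\<exists>A\<in>Ascr. Pset A0 \<union> Pset A1 \<subseteq> Pset A) \<longleftrightarrow> \<Union>(A0 \<inter> A1) = UNIV"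
  proof
    assume "\<exists>A\<in>Ascr. Pset A0 \<union> Pset A1 \<subseteq> Pset A"
    then obtain A where A: "A \<in> Ascr" "Pset A0 \<union> Pset A1 \<subseteq> Pset A" by (elim bexE)
    have "\<Union>A = UNIV" using A(1) unfolding Ascr_def Eprime_def by auto
    moreover have "A \<subseteq> A0 \<inter> A1" using sub[OF A] .
    ultimately show "\<Union>(A0 \<inter> A1) = UNIV" by (metis Sup_subset_mono top.extremum_uniqueI)
  next
    assume "\<Union>(A0 \<inter> A1) = UNIV"
    then have "A0 \<inter> A1 \<in> Ascr" using ii_iii by simp
    moreover have "Pset A0 \<union> Pset A1 \<subseteq> Pset (A0 \<inter> A1)"
      using Pset_anti[of "A0 \<inter> A1" A0] Pset_anti[of "A0 \<inter> A1" A1] by auto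
    ultimately show "\<exists>A\<in>Ascr. Pset A0 \<union> Pset A1 \<subseteq> Pset A" by (rule bexI[rotated])
  qed
  show "\<forall>A\<in>Ascr. Pset A0 \<union> Pset A1 \<subseteq> Pset A \<longrightarrow>
         Pset A0 \<union> Pset A1 \<subseteq> Pset (A0 \<inter> A1) \<and> Pset (A0 \<inter> A1) \<subseteq> Pset A"
  proof (intro ballI impI conjI)
    fix A assume "A \<in> Ascr" "Pset A0 \<union> Pset A1 \<subseteq> Pset A"
    then show "Pset (A0 \<inter> A1) \<subseteq> Pset A" by (intro Pset_anti sub)
  next
    show "Pset A0 \<union> Pset A1 \<subseteq> Pset (A0 \<inter> A1)"
      using Pset_anti[of "A0 \<inter> A1" A0] Pset_anti[of "A0 \<inter> A1" A1] by auto
  qed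
qed

end
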